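(* Let $\mathcal{E},\mathcal{F}$ satisfy: (i) $d^{(k)}_{ij}\ge0$ for all $1\le i<j\le5$, $1\le k\le4$ with $i+j+k=8$; (ii) if $d^{(1)}_{15},d^{(1)}_{24},d^{(4)}_{12}<0$ then $d^{(1)}_{25}=0$. Then a general section $\mathcal{A}\in H^0(\bigwedge^2\mathcal{F}\otimes\mathcal{E}\otimes\det\mathcal{E}^\vee)$ (i.e. all sections outside a proper Zariski-closed subset) has no $G$-translate which is in normal form of type $(K)$ at any point $p\in\mathbb{P}^1$, for any $1\le K\le4$.
   Context: Work over $\mathbb{C}$. Fix $g\ge0$, $N=g+4$, $\mathcal{E}\cong\bigoplus_{k=1}^4\mathcal{O}_{\mathbb{P}^1}(e_k)$ ($1\le e_1\le\dots\le e_4$, $\sum e_k=N$), $\mathcal{F}\cong\bigoplus_{i=1}^5\mathcal{O}(f_i)$ ($f_1\le\dots\le f_5$, $\sum f_i=2N$), splittings fixed; $d^{(k)}_{ij}=f_i+f_j+e_k-N$. A section is a quadruple $(A_1,\dots,A_4)$ of $5\times5$ alternating matrices whose $(i,j)$ entry $a^{(k)}_{ij}$ of $A_k$ is a homogeneous form in $\mathbb{C}[s,t]$ of degree $d^{(k)}_{ij}$. $G$ is the group of pairs $(g_4,g_5)$ of global automorphisms of $\mathcal{E},\mathcal{F}$ (as matrices w.r.t. the splittings, $(g_4)_{kl}$ of degree $e_k-e_l$, $(g_5)_{ij}$ of degree $f_i-f_j$) with $\det(g_4)^2=\det(g_5)$, acting by $(A_1,\dots,A_4)^t\mapsto\det(g_4)^{-1}g_4(A_1,\dots,A_4)^t$,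 $A_k\mapsto g_5A_kg_5^t$. A section is in normal form of type $(K)$ at $p$ if every entry of $A_K$ vanishes at $p$. *)

theory Defs
  imports Complex_Main "HOL-Combinatorics.Permutations"
begin

text \<open>Binary forms over C are represented by the functions C x C -> C they define.
  A binary form of degree d (d an integer) is such a function given by coefficients;
  for d < 0 the only form is 0.\<close>

definition form_of :: "int \<Rightarrow> (nat \<Rightarrow> complex) \<Rightarrow> complex \<Rightarrow> complex \<Rightarrow> complex" where
  "form_of d c s t = (if d < 0 then 0 else (\<Sum>m\<le>nat d. c m * s ^ m * t ^ (nat d - m)))"

definition hom_form :: "int \<Rightarrow> (complex \<Rightarrow> complex \<Rightarrow> complex) \<Rightarrow> bool" where
  "hom_form d \<phi> \<longleftrightarrow> (\<exists>c. \<phi> = form_of d c)"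

text \<open>Degree of the (i,j) entry of A_k: d^(k)_ij = f_i + f_j + e_k - N.\<close>
definition dd :: "(nat \<Rightarrow> int) \<Rightarrow> (nat \<Rightarrow> int) \<Rightarrow> int \<Rightarrow> nat \<Rightarrow> nat \<Rightarrow> nat \<Rightarrow> int" where
  "dd e f N k i j = f i + f j + e k - N"

text \<open>Sections: coefficient data c(k,i,j,m) = coefficient of s^m t^(d-m) in a^(k)_ij, stored
  for 1 <= k <= 4, 1 <= i < j <= 5 only (the rest determined by antisymmetry).\<close>
definition sections :: "(nat \<Rightarrow> int) \<Rightarrow> (nat \<Rightarrow> int) \<Rightarrow> int \<Rightarrow> (nat \<times> nat \<times> nat \<times> nat \<Rightarrow> complex) set" where
  "sections e f N = {c. \<forall>k i j m. c (k, i, j, m) \<noteq> 0 \<longrightarrow>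
      k \<in> {1..4} \<and> 1 \<le> i \<and> i < j \<and> j \<le> 5 \<and> 0 \<le> dd e f N k i j \<and> m \<le> nat (dd e f N k i j)}"

definition entry :: "(nat \<Rightarrow> int) \<Rightarrow> (nat \<Rightarrow> int) \<Rightarrow> int \<Rightarrow> (nat \<times> nat \<times> nat \<times> nat \<Rightarrow> complex)
    \<Rightarrow> nat \<Rightarrow> nat \<Rightarrow> nat \<Rightarrow> complex \<Rightarrow> complex \<Rightarrow> complex" where
  "entry e f N c k i j =
     (if i < j then form_of (dd e f N k i j) (\<lambda>m. c (k, i, j, m))
      else if j < i then (\<lambda>s t. - form_of (dd e f N k j i) (\<lambda>m. c (k, j, i, m)) s t)
      else (\<lambda>s t. 0))"

inductive polyfun :: "(('a \<Rightarrow> complex) \<Rightarrow> complex) \<Rightarrow> bool" where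
  pconst: "polyfun (\<lambda>x. a)"
| pvar: "polyfun (\<lambda>x. x v)"
| padd: "polyfun P \<Longrightarrow> polyfun Q \<Longrightarrow> polyfun (\<lambda>x. P x + Q x)"
| pmult: "polyfun P \<Longrightarrow> polyfun Q \<Longrightarrow> polyfun (\<lambda>x. P x * Q x)"

definition zariski_closed_in :: "('a \<Rightarrow> complex) set \<Rightarrow> ('a \<Rightarrow> complex) set \<Rightarrow> bool" where
  "zariski_closed_in V Z \<longleftrightarrow>
     (\<exists>S. (\<forall>P\<in>S. polyfun P) \<and> Z = {x\<in>V. \<forall>P\<in>S. P x = 0})"

text \<open>Matrices of binary forms indexed by {1..n}; global automorphisms of
  the split bundle O(w_1) + ... + O(w_n): entry (k,l) of degree w_k - w_l, with a
  two-sided inverse of the same shape.\<close>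
definition graded :: "nat \<Rightarrow> (nat \<Rightarrow> int) \<Rightarrow> (nat \<Rightarrow> nat \<Rightarrow> complex \<Rightarrow> complex \<Rightarrow> complex) \<Rightarrow> bool" where
  "graded n w g \<longleftrightarrow> (\<forall>k\<in>{1..n}. \<forall>l\<in>{1..n}. hom_form (w k - w l) (g k l))"

definition mprod :: "nat \<Rightarrow> (nat \<Rightarrow> nat \<Rightarrow> complex \<Rightarrow> complex \<Rightarrow> complex)
    \<Rightarrow> (nat \<Rightarrow> nat \<Rightarrow> complex \<Rightarrow> complex \<Rightarrow> complex) \<Rightarrow> nat \<Rightarrow> nat \<Rightarrow> complex \<Rightarrow> complex \<Rightarrow> complex" where
  "mprod n g h k l s t = (\<Sum>m\<in>{1..n}. g k m s t * h m l s t)"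

definition is_aut :: "nat \<Rightarrow> (nat \<Rightarrow> int) \<Rightarrow> (nat \<Rightarrow> nat \<Rightarrow> complex \<Rightarrow> complex \<Rightarrow> complex) \<Rightarrow> bool" where
  "is_aut n w g \<longleftrightarrow> graded n w g \<and>
     (\<exists>h. graded n w h \<and>
        (\<forall>k\<in>{1..n}. \<forall>l\<in>{1..n}. \<forall>s t.
            mprod n g h k l s t = (if k = l then 1 else 0) \<and>
            mprod n h g k l s t = (if k = l then 1 else 0)))"

definition detf :: "nat \<Rightarrow> (nat \<Rightarrow> nat \<Rightarrow> complex \<Rightarrow> complex \<Rightarrow> complex) \<Rightarrow> complex \<Rightarrow> complex \<Rightarrow> complex" where
  "detf n g s t = (\<Sum>p | p permutes {1..n}. of_int (sign p) * (\<Prod>i\<in>{1..n}. g i (p i) s t))"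

definition inG :: "(nat \<Rightarrow> int) \<Rightarrow> (nat \<Rightarrow> int)
    \<Rightarrow> (nat \<Rightarrow> nat \<Rightarrow> complex \<Rightarrow> complex \<Rightarrow> complex) \<Rightarrow> (nat \<Rightarrow> nat \<Rightarrow> complex \<Rightarrow> complex \<Rightarrow> complex) \<Rightarrow> bool" where
  "inG e f g4 g5 \<longleftrightarrow> is_aut 4 e g4 \<and> is_aut 5 f g5 \<and>
     (\<forall>s t. (detf 4 g4 s t) ^ 2 = detf 5 g5 s t)"

definition translate_entry :: "(nat \<Rightarrow> int) \<Rightarrow> (nat \<Rightarrow> int) \<Rightarrow> int
    \<Rightarrow> (nat \<Rightarrow> nat \<Rightarrow> complex \<Rightarrow> complex \<Rightarrow> complex) \<Rightarrow> (nat \<Rightarrow> nat \<Rightarrow> complex \<Rightarrow> complex \<Rightarrow> complex)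
    \<Rightarrow> (nat \<times> nat \<times> nat \<times> nat \<Rightarrow> complex) \<Rightarrow> nat \<Rightarrow> nat \<Rightarrow> nat \<Rightarrow> complex \<Rightarrow> complex \<Rightarrow> complex" where
  "translate_entry e f N g4 g5 c K i j s t =
     inverse (detf 4 g4 s t) *
       (\<Sum>l\<in>{1..4}. g4 K l s t *
          (\<Sum>a\<in>{1..5}. \<Sum>b\<in>{1..5}. g5 i a s t * entry e f N c l a b s t * g5 j b s t))"

text \<open>Normal form of type (K) at the point p = [s0:t0] of P^1: every entry of A_K vanishes at p.\<close>
definition normal_form_at :: "(nat \<Rightarrow> int) \<Rightarrow> (nat \<Rightarrow> int) \<Rightarrow> int
    \<Rightarrow> (nat \<Rightarrow> nat \<Rightarrow> complex \<Rightarrow> complex \<Rightarrow> complex) \<Rightarrow> (nat \<Rightarrow> nat \<Rightarrow> complex \<Rightarrow> complex \<Rightarrow> complex)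
    \<Rightarrow> (nat \<times> nat \<times> nat \<times> nat \<Rightarrow> complex) \<Rightarrow> nat \<Rightarrow> complex \<Rightarrow> complex \<Rightarrow> bool" where
  "normal_form_at e f N g4 g5 c K s0 t0 \<longleftrightarrow>
     (\<forall>i\<in>{1..5}. \<forall>j\<in>{1..5}. translate_entry e f N g4 g5 c K i j s0 t0 = 0)"

end

theory Submission
  imports Defs "Jordan_Normal_Form.Determinant"
begin


lemma polyfun_sum: "finite A \<Longrightarrow> (\<And>a. a \<in> A \<Longrightarrow> polyfun (F a)) \<Longrightarrow> polyfun (\<lambda>x. \<Sum>a\<in>A. F a x)"
proof (induction A rule: finite_induct)
  case empty then show ?case by (simp add: polyfun.pconst)
next
  case (insert a A) then show ?case by (simp add: polyfun.padd)
qed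

lemma polyfun_prod: "finite A \<Longrightarrow> (\<And>a. a \<in> A \<Longrightarrow> polyfun (F a)) \<Longrightarrow> polyfun (\<lambda>x. \<Prod>a\<in>A. F a x)"
proof (induction A rule: finite_induct)
  case empty then show ?case by (simp add: polyfun.pconst)
next
  case (insert a A) then show ?case by (simp add: polyfun.pmult)
qed

lemma polyfun_scale: "polyfun P \<Longrightarrow> polyfun (\<lambda>x. k * P x)"
  using polyfun.pmult[OF polyfun.pconst] by blast

lemma form_mult_nat:
  fixes a b :: "nat \<Rightarrow> complex" and n1 n2 :: nat
  shows "(\<Sum>m\<le>n1. a m * s^m * t^(n1-m)) * (\<Sum>m\<le>n2. b m * s^m * t^(n2-m)) =
    (\<Sum>k\<le>n1+n2. (\<Sum>i\<le>k. (if i \<le> n1 \<and> k - i \<le> n2 then a i * b (k-i) else 0)) * s^k * t^(n1+n2-k))"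
proof -
  define g where "g i j = (if i \<le> n1 \<and> j \<le> n2 then a i * b j * s^(i+j) * t^(n1+n2-(i+j)) else 0)" for i j
  have "(\<Sum>m\<le>n1. a m * s^m * t^(n1-m)) * (\<Sum>m\<le>n2. b m * s^m * t^(n2-m))
      = (\<Sum>i\<le>n1. \<Sum>j\<le>n2. a i * b j * s^(i+j) * t^(n1+n2-(i+j)))"
    unfolding sum_product
    apply (rule sum.cong[OF refl], rule sum.cong[OF refl])
  proof -
    fix i j assume "i \<in> {..n1}" "j \<in> {..n2}"
    then have "n1 + n2 - (i + j) = (n1 - i) + (n2 - j)" by auto
    then show "a i * s ^ i * t ^ (n1 - i) * (b j * s ^ j * t ^ (n2 - j)) = a i * b j * s ^ (i + j) * t ^ (n1 + n2 - (i + j))"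
      by (simp add: power_add algebra_simps)
  qed
  also have "\<dots> = (\<Sum>(i,j)\<in>{..n1}\<times>{..n2}. g i j)"
    by (simp add: sum.cartesian_product[symmetric] g_def)
  also have "\<dots> = (\<Sum>(i,j)\<in>{(i,j). i+j \<le> n1+n2}. g i j)"
  proof (rule sum.mono_neutral_left)
    show "finite {(i,j). i+j \<le> n1+n2}"
      by (rule finite_subset[of _ "{..n1+n2}\<times>{..n1+n2}"]) auto
  qed (auto simp: g_def split: if_splits)
  also have "\<dots> = (\<Sum>k\<le>n1+n2. \<Sum>i\<le>k. g i (k-i))"
    by (rule sum.triangle_reindex_eq)
  also have "\<dots> = (\<Sum>k\<le>n1+n2. (\<Sum>i\<le>k. (if i \<le> n1 \<and> k - i \<le> n2 then a i * b (k-i) else 0)) * s^k * t^(n1+n2-k))"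
    unfolding sum_distrib_right
    by (rule sum.cong[OF refl], rule sum.cong[OF refl]) (auto simp: g_def)
  finally show ?thesis .
qed


definition conv :: "int \<Rightarrow> int \<Rightarrow> (nat\<Rightarrow>complex) \<Rightarrow> (nat\<Rightarrow>complex) \<Rightarrow> nat \<Rightarrow> complex" where
  "conv d1 d2 a b k = (\<Sum>i\<le>k. if i \<le> nat d1 \<and> k-i \<le> nat d2 then a i * b (k-i) else 0)"

lemma form_mult:
  assumes "0 \<le> d1" "0 \<le> d2"
  shows "form_of d1 a s t * form_of d2 b s t = form_of (d1+d2) (conv d1 d2 a b) s t"
proof -
  have n: "nat (d1+d2) = nat d1 + nat d2" using assms by auto
  show ?thesis using assms unfolding form_of_def conv_def n
    by (simp add: form_mult_nat)
qed

lemma form_zero: "form_of d (\<lambda>m. 0) s t = 0"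
  by (simp add: form_of_def)

lemma form_add: "form_of d a s t + form_of d b s t = form_of d (\<lambda>m. a m + b m) s t"
  by (simp add: form_of_def sum.distrib algebra_simps)

lemma form_scale: "k * form_of d a s t = form_of d (\<lambda>m. k * a m) s t"
  by (simp add: form_of_def sum_distrib_left algebra_simps)

lemma form_one: "form_of 0 (\<lambda>m. 1) s t = 1"
  by (simp add: form_of_def)

definition pform :: "int \<Rightarrow> (('v \<Rightarrow> complex) \<Rightarrow> complex \<Rightarrow> complex \<Rightarrow> complex) \<Rightarrow> bool" where
  "pform d F \<longleftrightarrow> (\<exists>C. (\<forall>m. polyfun (C m)) \<and> (\<forall>x. F x = form_of d (\<lambda>m. C m x)))"

lemma polyfun_if_const: "polyfun P \<Longrightarrow> polyfun (\<lambda>x. if b then P x else 0)"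
  by (cases b) (auto intro: polyfun.pconst)

lemma pform_zero: "pform d (\<lambda>x s t. 0)"
  unfolding pform_def by (rule exI[of _ "\<lambda>m x. 0"]) (auto intro: polyfun.pconst simp: form_zero fun_eq_iff)

lemma pform_add: "pform d F \<Longrightarrow> pform d G \<Longrightarrow> pform d (\<lambda>x s t. F x s t + G x s t)"
  unfolding pform_def
proof (elim exE conjE)
  fix C1 C2 assume h: "\<forall>m. polyfun (C1 m)" "\<forall>x. F x = form_of d (\<lambda>m. C1 m x)"
    "\<forall>m. polyfun (C2 m)" "\<forall>x. G x = form_of d (\<lambda>m. C2 m x)"
  show "\<exists>C. (\<forall>m. polyfun (C m)) \<and> (\<forall>x. (\<lambda>s t. F x s t + G x s t) = form_of d (\<lambda>m. C m x))"
    by (rule exI[of _ "\<lambda>m x. C1 m x + C2 m x"]) (auto simp: h form_add intro: polyfun.padd)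
qed

lemma pform_scale: "pform d F \<Longrightarrow> pform d (\<lambda>x s t. k * F x s t)"
  unfolding pform_def
proof (elim exE conjE)
  fix C1 assume h: "\<forall>m. polyfun (C1 m)" "\<forall>x. F x = form_of d (\<lambda>m. C1 m x)"
  show "\<exists>C. (\<forall>m. polyfun (C m)) \<and> (\<forall>x. (\<lambda>s t. k * F x s t) = form_of d (\<lambda>m. C m x))"
    by (rule exI[of _ "\<lambda>m x. k * C1 m x"]) (auto simp: h form_scale intro: polyfun_scale)
qed

lemma pform_one: "pform 0 (\<lambda>x s t. 1)"
  unfolding pform_def
  by (rule exI[of _ "\<lambda>m x. 1"]) (auto simp: form_one fun_eq_iff intro: polyfun.pconst)

lemma pform_mult: "pform d1 F \<Longrightarrow> pform d2 G \<Longrightarrow> pform (d1+d2) (\<lambda>x s t. F x s t * G x s t)"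
  unfolding pform_def
proof (elim exE conjE)
  fix C1 C2 assume h: "\<forall>m. polyfun (C1 m)" "\<forall>x. F x = form_of d1 (\<lambda>m. C1 m x)"
    "\<forall>m. polyfun (C2 m)" "\<forall>x. G x = form_of d2 (\<lambda>m. C2 m x)"
  show "\<exists>C. (\<forall>m. polyfun (C m)) \<and> (\<forall>x. (\<lambda>s t. F x s t * G x s t) = form_of (d1+d2) (\<lambda>m. C m x))"
  proof (cases "0 \<le> d1 \<and> 0 \<le> d2")
    case True
    show ?thesis
      apply (rule exI[of _ "\<lambda>m x. conv d1 d2 (\<lambda>m. C1 m x) (\<lambda>m. C2 m x) m"])
      apply (intro conjI allI)
       apply (unfold conv_def)
       apply (rule polyfun_sum, simp)
       apply (rule polyfun_if_const, rule polyfun.pmult, use h in auto)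
      using form_mult[OF conjunct1[OF True] conjunct2[OF True]] unfolding conv_def by auto
  next
    case False
    then have "F x s t * G x s t = 0" for x s t using h by (auto simp: form_of_def)
    then show ?thesis
      by (intro exI[of _ "\<lambda>m x. 0"]) (auto intro: polyfun.pconst simp: form_zero fun_eq_iff)
  qed
qed

lemma pform_cong: "pform d F \<Longrightarrow> d = d' \<Longrightarrow> (\<And>x s t. F x s t = G x s t) \<Longrightarrow> pform d' G"
proof -
  assume "pform d F" "d = d'" "\<And>x s t. F x s t = G x s t"
  moreover have "F = G" using \<open>\<And>x s t. F x s t = G x s t\<close> by (intro ext) auto
  ultimately show ?thesis by simp
qed

lemma pform_sum: "finite A \<Longrightarrow> (\<And>a. a \<in> A \<Longrightarrow> pform d (F a)) \<Longrightarrow> pform d (\<lambda>x s t. \<Sum>a\<in>A. F a x s t)"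
proof (induction A rule: finite_induct)
  case empty then show ?case by (simp add: pform_zero)
next
  case (insert a A) then show ?case by (simp add: pform_add)
qed

lemma pform_prod: "finite A \<Longrightarrow> (\<And>a. a \<in> A \<Longrightarrow> pform (d a) (F a)) \<Longrightarrow> pform (\<Sum>a\<in>A. d a) (\<lambda>x s t. \<Prod>a\<in>A. F a x s t)"
proof (induction A rule: finite_induct)
  case empty then show ?case by (simp add: pform_one)
next
  case (insert a A) then show ?case by (simp add: pform_mult)
qed

lemma pform_det:
  assumes "\<And>i j. i < n \<Longrightarrow> j < n \<Longrightarrow> pform (r i + q j) (X i j)"
  shows "pform ((\<Sum>i<n. r i) + (\<Sum>j<n. q j)) (\<lambda>x s t. det (mat n n (\<lambda>(i,j). X i j x s t)))"
proof -
  have "pform ((\<Sum>i<n. r i) + (\<Sum>j<n. q j))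
     (\<lambda>x s t. \<Sum>p\<in>{p. p permutes {0..<n}}. signof p * (\<Prod>i\<in>{0..<n}. X i (p i) x s t))"
  proof (rule pform_sum)
    show "finite {p. p permutes {0..<n}}" by (simp add: finite_permutations)
    fix p assume "p \<in> {p. p permutes {0..<n}}"
    then have p: "p permutes {0..<n}" by simp
    have pin: "i < n \<Longrightarrow> p i < n" for i using p by (simp add: permutes_in_image)
    have "pform (\<Sum>i\<in>{0..<n}. r i + q (p i)) (\<lambda>x s t. \<Prod>i\<in>{0..<n}. X i (p i) x s t)"
      by (rule pform_prod) (auto intro: assms pin)
    moreover have "(\<Sum>i\<in>{0..<n}. r i + q (p i)) = (\<Sum>i<n. r i) + (\<Sum>j<n. q j)"
    proof -
      have "(\<Sum>i\<in>{0..<n}. q (p i)) = (\<Sum>i\<in>{0..<n}. q i)"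
        using sum.permute[OF p, of q] by (simp add: comp_def)
      then show ?thesis by (simp add: sum.distrib atLeast0LessThan)
    qed
    ultimately show "pform ((\<Sum>i<n. r i) + (\<Sum>j<n. q j)) (\<lambda>x s t. signof p * (\<Prod>i\<in>{0..<n}. X i (p i) x s t))"
      by (auto intro: pform_scale)
  qed
  then show ?thesis
    by (rule pform_cong) (auto simp: det_def)
qed

lemma polyfun_det:
  assumes "\<And>i j. i < n \<Longrightarrow> j < n \<Longrightarrow> polyfun (Y i j)"
  shows "polyfun (\<lambda>x. det (mat n n (\<lambda>(i,j). Y i j x)))"
proof -
  have "polyfun (\<lambda>x. \<Sum>p\<in>{p. p permutes {0..<n}}. signof p * (\<Prod>i\<in>{0..<n}. Y i (p i) x))"
    apply (rule polyfun_sum, simp add: finite_permutations)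
    apply (rule polyfun_scale, rule polyfun_prod, simp)
    using assms permutes_in_image by fastforce
  then show ?thesis by (simp add: det_def)
qed

lemma form_coeff_unique:
  assumes "0 \<le> d" "\<And>s t. form_of d a s t = form_of d b s t" "m \<le> nat d"
  shows "a m = b m"
proof -
  have "\<forall>s. (\<Sum>i\<le>nat d. a i * s^i) = (\<Sum>i\<le>nat d. b i * s^i)"
    using assms(2)[of _ 1] assms(1) by (simp add: form_of_def)
  then show ?thesis using polyfun_eq_coeffs assms(3) by blast
qed



definition sylv :: "nat \<Rightarrow> nat \<Rightarrow> (nat \<Rightarrow> complex) \<Rightarrow> (nat \<Rightarrow> complex) \<Rightarrow> complex mat" where
  "sylv D1 D2 a b = mat (D1+D2) (D1+D2) (\<lambda>(i,k).
     if i < D2 then (if i \<le> k \<and> k - i \<le> D1 then a (k-i) else 0)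
     else (if i - D2 \<le> k \<and> k - (i-D2) \<le> D2 then b (k - (i-D2)) else 0))"

lemma shifted_sum:
  fixes g :: "nat \<Rightarrow> complex"
  assumes "i + D < n"
  shows "(\<Sum>k\<in>{0..<n}. (if i \<le> k \<and> k - i \<le> D then g (k-i) * h k else 0)) = (\<Sum>m\<le>D. g m * h (m+i))"
proof -
  have "(\<Sum>k\<in>{0..<n}. (if i \<le> k \<and> k - i \<le> D then g (k-i) * h k else 0))
     = (\<Sum>k\<in>{k\<in>{0..<n}. i \<le> k \<and> k - i \<le> D}. g (k-i) * h k)"
    using sum.inter_filter[of "{0..<n}" "\<lambda>k. g (k-i) * h k" "\<lambda>k. i \<le> k \<and> k - i \<le> D"] by simp
  also have "{k\<in>{0..<n}. i \<le> k \<and> k - i \<le> D} = (\<lambda>m. m+i) ` {..D}"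
    using assms apply (auto simp: image_iff)
    apply (rule_tac x="x-i" in bexI) by auto
  also have "(\<Sum>k\<in>(\<lambda>m. m+i) ` {..D}. g (k-i) * h k) = (\<Sum>m\<le>D. g m * h (m+i))"
    by (subst sum.reindex) (auto simp: inj_on_def)
  finally show ?thesis .
qed

lemma sylv_root:
  assumes "(s0, t0) \<noteq> (0,0)" "form_of (int D1) a s0 t0 = 0" "form_of (int D2) b s0 t0 = 0" "0 < D1 + D2"
  shows "det (sylv D1 D2 a b) = 0"
proof -
  define n where "n = D1 + D2"
  define w where "w = vec n (\<lambda>k. s0^k * t0^(n-1-k))"
  have wc: "w \<in> carrier_vec n" by (simp add: w_def)
  have wnz: "w \<noteq> 0\<^sub>v n"
  proof
    assume w0: "w = 0\<^sub>v n"
    show False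
    proof (cases "s0 = 0")
      case True
      then have "t0 \<noteq> 0" using assms(1) by auto
      moreover have "w $ 0 = t0^(n-1)" using assms(4) by (simp add: w_def n_def)
      ultimately show False using w0 assms(4) by (simp add: n_def)
    next
      case False
      moreover have "w $ (n-1) = s0^(n-1)" using assms(4) by (simp add: w_def n_def)
      ultimately show False using w0 assms(4) by (simp add: n_def)
    qed
  qed
  have "sylv D1 D2 a b *\<^sub>v w = 0\<^sub>v n"
  proof (rule eq_vecI)
    fix i assume i: "i < dim_vec (0\<^sub>v n :: complex vec)"
    then have i: "i < n" by simp
    have "(sylv D1 D2 a b *\<^sub>v w) $ i = (\<Sum>k\<in>{0..<n}. sylv D1 D2 a b $$ (i,k) * w $ k)"
      using i by (simp add: sylv_def n_def scalar_prod_def w_def)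
    also have "\<dots> = 0"
    proof (cases "i < D2")
      case True
      have "(\<Sum>k\<in>{0..<n}. sylv D1 D2 a b $$ (i,k) * w $ k)
          = (\<Sum>k\<in>{0..<n}. (if i \<le> k \<and> k - i \<le> D1 then a (k-i) * (s0^k * t0^(n-1-k)) else 0))"
        by (rule sum.cong) (use i in \<open>auto simp: sylv_def n_def w_def True\<close>)
      also have "\<dots> = (\<Sum>m\<le>D1. a m * (s0^(m+i) * t0^(n-1-(m+i))))"
        by (rule shifted_sum) (use True in \<open>simp add: n_def\<close>)
      also have "\<dots> = (\<Sum>m\<le>D1. (s0^i * t0^(D2-1-i)) * (a m * s0^m * t0^(D1-m)))"
      proof (rule sum.cong[OF refl])
        fix m assume "m \<in> {..D1}"
        then have "n-1-(m+i) = (D1 - m) + (D2-1-i)" using True by (simp add: n_def)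
        then show "a m * (s0^(m+i) * t0^(n-1-(m+i))) = (s0^i * t0^(D2-1-i)) * (a m * s0^m * t0^(D1-m))"
          by (simp add: power_add algebra_simps)
      qed
      also have "\<dots> = 0" using assms(2) by (simp add: form_of_def sum_distrib_left[symmetric])
      finally show ?thesis .
    next
      case False
      define j where "j = i - D2"
      have j: "j < D1" using i False by (simp add: j_def n_def)
      have "(\<Sum>k\<in>{0..<n}. sylv D1 D2 a b $$ (i,k) * w $ k)
          = (\<Sum>k\<in>{0..<n}. (if j \<le> k \<and> k - j \<le> D2 then b (k-j) * (s0^k * t0^(n-1-k)) else 0))"
        by (rule sum.cong) (use i in \<open>auto simp: sylv_def n_def w_def False j_def\<close>)
      also have "\<dots> = (\<Sum>m\<le>D2. b m * (s0^(m+j) * t0^(n-1-(m+j))))"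
        by (rule shifted_sum) (use j in \<open>simp add: n_def\<close>)
      also have "\<dots> = (\<Sum>m\<le>D2. (s0^j * t0^(D1-1-j)) * (b m * s0^m * t0^(D2-m)))"
      proof (rule sum.cong[OF refl])
        fix m assume "m \<in> {..D2}"
        then have "n-1-(m+j) = (D2 - m) + (D1-1-j)" using j by (simp add: n_def)
        then show "b m * (s0^(m+j) * t0^(n-1-(m+j))) = (s0^j * t0^(D1-1-j)) * (b m * s0^m * t0^(D2-m))"
          by (simp add: power_add algebra_simps)
      qed
      also have "\<dots> = 0" using assms(3) by (simp add: form_of_def sum_distrib_left[symmetric])
      finally show ?thesis .
    qed
    finally show "(sylv D1 D2 a b *\<^sub>v w) $ i = 0\<^sub>v n $ i" using i by simp
  qed (simp add: sylv_def n_def)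
  moreover have "sylv D1 D2 a b \<in> carrier_mat n n" by (simp add: sylv_def n_def)
  ultimately show ?thesis using det_0_iff_vec_prod_zero wc wnz by blast
qed

lemma sylv_nonzero:
  assumes "\<And>m. m \<le> D1 \<Longrightarrow> a m = (if m = D1 then \<sigma>1 else 0)"
    and "\<And>m. m \<le> D2 \<Longrightarrow> b m = (if m = 0 then \<sigma>2 else 0)"
    and "\<sigma>1 \<noteq> 0" "\<sigma>2 \<noteq> 0"
  shows "det (sylv D1 D2 a b) \<noteq> 0"
proof
  define n where "n = D1 + D2"
  have car: "sylv D1 D2 a b \<in> carrier_mat n n" by (simp add: sylv_def n_def)
  assume "det (sylv D1 D2 a b) = 0"
  then obtain v where v: "v \<in> carrier_vec n" "v \<noteq> 0\<^sub>v n" "sylv D1 D2 a b *\<^sub>v v = 0\<^sub>v n"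
    using det_0_iff_vec_prod_zero[OF car] by blast
  have row: "(\<Sum>k\<in>{0..<n}. sylv D1 D2 a b $$ (i,k) * v $ k) = 0" if "i < n" for i
  proof -
    have "(sylv D1 D2 a b *\<^sub>v v) $ i = 0" using v(3) that by simp
    then show ?thesis using that v(1) by (simp add: sylv_def n_def scalar_prod_def)
  qed
  have "v $ k = 0" if k: "k < n" for k
  proof (cases "D1 \<le> k")
    case True
    define i where "i = k - D1"
    have i: "i < D2" "i < n" using k True by (auto simp: i_def n_def)
    have "(\<Sum>k'\<in>{0..<n}. sylv D1 D2 a b $$ (i,k') * v $ k') = (\<Sum>k'\<in>{0..<n}. if k' = k then \<sigma>1 * v $ k' else 0)"
      by (rule sum.cong) (use i True in \<open>auto simp: sylv_def n_def assms(1) i_def\<close>)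
    also have "\<dots> = \<sigma>1 * v $ k" using k by simp
    finally show ?thesis using row[OF i(2)] assms(3) by simp
  next
    case False
    define i where "i = k + D2"
    have i: "\<not> i < D2" "i < n" using k False by (auto simp: i_def n_def)
    have "(\<Sum>k'\<in>{0..<n}. sylv D1 D2 a b $$ (i,k') * v $ k') = (\<Sum>k'\<in>{0..<n}. if k' = k then \<sigma>2 * v $ k' else 0)"
      by (rule sum.cong) (use i False in \<open>auto simp: sylv_def n_def assms(2) i_def\<close>)
    also have "\<dots> = \<sigma>2 * v $ k" using k by simp
    finally show ?thesis using row[OF i(2)] assms(4) by simp
  qed
  then have "v = 0\<^sub>v n" using v(1) by (intro eq_vecI) auto
  then show False using v(2) by simp
qed


lemma polyfun_if: "polyfun P \<Longrightarrow> polyfun Q \<Longrightarrow> polyfun (\<lambda>x. if b then P x else Q x)"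
  by (cases b) auto

lemma form_spow: "form_of (int D) (\<lambda>m. if m = D then \<sigma> else 0) s t = \<sigma> * s^D"
proof -
  have "(\<Sum>m\<le>D. (if m = D then \<sigma> else 0) * s ^ m * t ^ (D - m)) = (\<Sum>m\<le>D. if m = D then \<sigma> * s^D else 0)"
    by (rule sum.cong) auto
  then show ?thesis by (simp add: form_of_def)
qed

lemma form_tpow: "form_of (int D) (\<lambda>m. if m = 0 then \<sigma> else 0) s t = \<sigma> * t^D"
proof -
  have "(\<Sum>m\<le>D. (if m = 0 then \<sigma> else 0) * s ^ m * t ^ (D - m)) = (\<Sum>m\<le>D. if m = 0 then \<sigma> * t^D else 0)"
    by (rule sum.cong) auto
  then show ?thesis by (simp add: form_of_def)
qed

lemma resultant_exists:
  fixes F G :: "('v \<Rightarrow> complex) \<Rightarrow> complex \<Rightarrow> complex \<Rightarrow> complex"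
  assumes "pform (int Da) F" "pform (int Db) G" "0 < Da + Db"
    "\<And>s t. F xz s t = ka * s^Da" "\<And>s t. G xz s t = kb * t^Db" "ka \<noteq> 0" "kb \<noteq> 0"
  shows "\<exists>P. polyfun P \<and> P xz \<noteq> 0 \<and>
     (\<forall>x s0 t0. (s0,t0) \<noteq> (0,0) \<longrightarrow> F x s0 t0 = 0 \<longrightarrow> G x s0 t0 = 0 \<longrightarrow> P x = 0)"
proof -
  obtain C1 where C1: "\<forall>m. polyfun (C1 m)" "\<forall>x. F x = form_of (int Da) (\<lambda>m. C1 m x)"
    using assms(1) unfolding pform_def by blast
  obtain C2 where C2: "\<forall>m. polyfun (C2 m)" "\<forall>x. G x = form_of (int Db) (\<lambda>m. C2 m x)"
    using assms(2) unfolding pform_def by blast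
  define P where "P x = det (sylv Da Db (\<lambda>m. C1 m x) (\<lambda>m. C2 m x))" for x
  have "polyfun P"
  proof -
    have "polyfun (\<lambda>x. det (mat (Da+Db) (Da+Db) (\<lambda>(i,k). (\<lambda>i k x.
     if i < Db then (if i \<le> k \<and> k - i \<le> Da then C1 (k-i) x else 0)
     else (if i - Db \<le> k \<and> k - (i-Db) \<le> Db then C2 (k - (i-Db)) x else 0)) i k x)))"
      by (rule polyfun_det) (intro polyfun_if C1(1)[rule_format] C2(1)[rule_format] polyfun.pconst)
    then show ?thesis unfolding P_def sylv_def by simp
  qed
  moreover have "P xz \<noteq> 0"
    unfolding P_def
  proof (rule sylv_nonzero[OF _ _ assms(6,7)])
    fix m assume m: "m \<le> Da"
    show "C1 m xz = (if m = Da then ka else 0)"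
      by (rule form_coeff_unique[of "int Da"]) (use m C1(2) assms(4) form_spow in auto)
  next
    fix m assume m: "m \<le> Db"
    show "C2 m xz = (if m = 0 then kb else 0)"
      by (rule form_coeff_unique[of "int Db"]) (use m C2(2) assms(5) form_tpow in auto)
  qed
  moreover have "\<forall>x s0 t0. (s0,t0) \<noteq> (0,0) \<longrightarrow> F x s0 t0 = 0 \<longrightarrow> G x s0 t0 = 0 \<longrightarrow> P x = 0"
    unfolding P_def using sylv_root assms(3) C1(2) C2(2) by metis
  ultimately show ?thesis by blast
qed



definition bord :: "nat \<Rightarrow> (nat \<Rightarrow> nat \<Rightarrow> complex) \<Rightarrow> complex mat" where
  "bord n G = mat (Suc n) (Suc n) (\<lambda>(i,j). if i = 0 \<and> j = 0 then 1 else if i = 0 \<or> j = 0 then 0 else G i j)"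

lemma det_bord: "det (bord n G) = (\<Sum>p | p permutes {1..n}. of_int (sign p) * (\<Prod>i\<in>{1..n}. G i (p i)))"
proof -
  have "det (bord n G) = (\<Sum>p\<in>{p. p permutes {0..<Suc n}}. of_int (sign p) * (\<Prod>i\<in>{0..<Suc n}. bord n G $$ (i, p i)))"
    by (simp add: det_def bord_def)
  also have "\<dots> = (\<Sum>p\<in>{p. p permutes {1..n}}. of_int (sign p) * (\<Prod>i\<in>{0..<Suc n}. bord n G $$ (i, p i)))"
  proof (rule sum.mono_neutral_right)
    show "finite {p. p permutes {0..<Suc n}}" by (simp add: finite_permutations)
    show "{p. p permutes {1..n}} \<subseteq> {p. p permutes {0..<Suc n}}"
      by (auto intro: permutes_subset)
    show "\<forall>p\<in>{p. p permutes {0..<Suc n}} - {p. p permutes {1..n}}.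
        of_int (sign p) * (\<Prod>i\<in>{0..<Suc n}. bord n G $$ (i, p i)) = 0"
    proof
      fix p assume p: "p \<in> {p. p permutes {0..<Suc n}} - {p. p permutes {1..n}}"
      then have pp: "p permutes {0..<Suc n}" by simp
      have "p 0 \<noteq> 0"
      proof
        assume "p 0 = 0"
        have "p permutes {1..n}"
        proof (rule permutes_superset[OF pp])
          fix x assume "x \<in> {0..<Suc n} - {1..n}"
          then have "x = 0" by auto
          then show "p x = x" using \<open>p 0 = 0\<close> by simp
        qed
        then show False using p by simp
      qed
      moreover have "p 0 < Suc n" using permutes_in_image[OF pp, of 0] by simp
      ultimately have "bord n G $$ (0, p 0) = 0" by (simp add: bord_def)
      then have "(\<Prod>i\<in>{0..<Suc n}. bord n G $$ (i, p i)) = 0"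
        by (intro prod_zero) (auto intro!: bexI[of _ 0])
      then show "of_int (sign p) * (\<Prod>i\<in>{0..<Suc n}. bord n G $$ (i, p i)) = 0" by simp
    qed
  qed
  also have "\<dots> = (\<Sum>p | p permutes {1..n}. of_int (sign p) * (\<Prod>i\<in>{1..n}. G i (p i)))"
  proof (rule sum.cong[OF refl])
    fix p assume "p \<in> {p. p permutes {1..n}}"
    then have pp: "p permutes {1..n}" by simp
    have p0: "p 0 = 0" using permutes_not_in[OF pp, of 0] by simp
    have pin: "i \<in> {1..n} \<Longrightarrow> p i \<in> {1..n}" for i using permutes_in_image[OF pp] by simp
    have "{0..<Suc n} = insert 0 {1..n}" by auto
    then have "(\<Prod>i\<in>{0..<Suc n}. bord n G $$ (i, p i)) = bord n G $$ (0, p 0) * (\<Prod>i\<in>{1..n}. bord n G $$ (i, p i))"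
      by simp
    also have "\<dots> = (\<Prod>i\<in>{1..n}. G i (p i))"
    proof -
      have "bord n G $$ (0, p 0) = 1" by (simp add: bord_def p0)
      moreover have "(\<Prod>i\<in>{1..n}. bord n G $$ (i, p i)) = (\<Prod>i\<in>{1..n}. G i (p i))"
      proof (rule prod.cong[OF refl])
        fix i assume i: "i \<in> {1..n}"
        then have "p i \<in> {1..n}" by (rule pin)
        with i show "bord n G $$ (i, p i) = G i (p i)" by (simp add: bord_def)
      qed
      ultimately show ?thesis by simp
    qed
    finally show "of_int (sign p) * (\<Prod>i\<in>{0..<Suc n}. bord n G $$ (i, p i)) = of_int (sign p) * (\<Prod>i\<in>{1..n}. G i (p i))"
      by simp
  qed
  finally show ?thesis .
qed

lemma bord_mult:
  assumes "\<And>k l. k \<in> {1..n} \<Longrightarrow> l \<in> {1..n} \<Longrightarrow> (\<Sum>m\<in>{1..n}. G k m * H m l) = (if k = l then 1 else 0)"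
  shows "bord n G * bord n H = 1\<^sub>m (Suc n)"
proof (rule eq_matI)
  fix i j assume i: "i < dim_row (1\<^sub>m (Suc n) :: complex mat)" and j: "j < dim_col (1\<^sub>m (Suc n) :: complex mat)"
  then have i: "i < Suc n" and j: "j < Suc n" by auto
  have "(bord n G * bord n H) $$ (i,j) = (\<Sum>m\<in>{0..<Suc n}. bord n G $$ (i,m) * bord n H $$ (m,j))"
    using i j by (simp add: bord_def scalar_prod_def)
  also have "\<dots> = bord n G $$ (i,0) * bord n H $$ (0,j) + (\<Sum>m\<in>{1..n}. bord n G $$ (i,m) * bord n H $$ (m,j))"
  proof -
    have "{0..<Suc n} = insert 0 {1..n}" by auto
    then show ?thesis by simp
  qed
  also have "\<dots> = 1\<^sub>m (Suc n) $$ (i,j)"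
  proof (cases "i = 0 \<or> j = 0")
    case True
    have "(\<Sum>m\<in>{1..n}. bord n G $$ (i,m) * bord n H $$ (m,j)) = 0"
      using True i j by (intro sum.neutral) (auto simp: bord_def)
    then show ?thesis using True i j by (auto simp: bord_def)
  next
    case False
    have "(\<Sum>m\<in>{1..n}. bord n G $$ (i,m) * bord n H $$ (m,j)) = (\<Sum>m\<in>{1..n}. G i m * H m j)"
      using False i j by (intro sum.cong) (auto simp: bord_def)
    also have "\<dots> = (if i = j then 1 else 0)" using assms[of i j] False i j by auto
    finally show ?thesis using False i j by (auto simp: bord_def)
  qed
  finally show "(bord n G * bord n H) $$ (i,j) = 1\<^sub>m (Suc n) $$ (i,j)" .
qed (auto simp: bord_def)

lemma detf_nonzero:
  assumes "is_aut n w g"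
  shows "detf n g s t \<noteq> 0"
proof -
  obtain h where h: "\<forall>k\<in>{1..n}. \<forall>l\<in>{1..n}. \<forall>s t.
            mprod n g h k l s t = (if k = l then 1 else 0)"
    using assms unfolding is_aut_def by blast
  have "bord n (\<lambda>i j. g i j s t) * bord n (\<lambda>i j. h i j s t) = 1\<^sub>m (Suc n)"
    by (rule bord_mult) (use h in \<open>auto simp: mprod_def\<close>)
  then have "det (bord n (\<lambda>i j. g i j s t)) * det (bord n (\<lambda>i j. h i j s t)) = 1"
    using det_mult[of "bord n (\<lambda>i j. g i j s t)" "Suc n" "bord n (\<lambda>i j. h i j s t)"]
    by (simp add: bord_def)
  then have "det (bord n (\<lambda>i j. g i j s t)) \<noteq> 0" by auto
  then show ?thesis by (simp add: det_bord detf_def)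
qed



lemma sum4_swap: "(\<Sum>x\<in>S. \<Sum>y\<in>T. \<Sum>i\<in>U. \<Sum>j\<in>V. f x y i j) = (\<Sum>i\<in>U. \<Sum>j\<in>V. \<Sum>x\<in>S. \<Sum>y\<in>T. f x y i j)"
proof -
  have "(\<Sum>x\<in>S. \<Sum>y\<in>T. \<Sum>i\<in>U. \<Sum>j\<in>V. f x y i j) = (\<Sum>x\<in>S. \<Sum>i\<in>U. \<Sum>y\<in>T. \<Sum>j\<in>V. f x y i j)"
    by (rule sum.cong[OF refl], rule sum.swap)
  also have "\<dots> = (\<Sum>i\<in>U. \<Sum>x\<in>S. \<Sum>y\<in>T. \<Sum>j\<in>V. f x y i j)" by (rule sum.swap)
  also have "\<dots> = (\<Sum>i\<in>U. \<Sum>x\<in>S. \<Sum>j\<in>V. \<Sum>y\<in>T. f x y i j)"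
    by (rule sum.cong[OF refl], rule sum.cong[OF refl], rule sum.swap)
  also have "\<dots> = (\<Sum>i\<in>U. \<Sum>j\<in>V. \<Sum>x\<in>S. \<Sum>y\<in>T. f x y i j)"
    by (rule sum.cong[OF refl], rule sum.swap)
  finally show ?thesis .
qed

lemma congruence_zero:
  fixes G H B :: "nat \<Rightarrow> nat \<Rightarrow> complex"
  assumes "\<forall>i\<in>S. \<forall>j\<in>S. (\<Sum>x\<in>S. \<Sum>y\<in>S. G i x * B x y * G j y) = 0"
    and "\<forall>k\<in>S. \<forall>l\<in>S. (\<Sum>m\<in>S. H k m * G m l) = (if k = l then 1 else 0)"
    and "a \<in> S" "b \<in> S" "finite S"
  shows "B a b = 0"
proof -
  have "(\<Sum>x\<in>S. \<Sum>y\<in>S. (if a = x then 1 else 0) * (if b = y then 1 else 0) * B x y)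
     = (\<Sum>x\<in>S. if a = x then (\<Sum>y\<in>S. if b = y then B x y else 0) else 0)"
    by (intro sum.cong refl) (auto intro!: sum.cong)
  also have "\<dots> = B a b" using assms(3,4,5) by (simp add: sum.delta sum.delta')
  finally have "B a b = (\<Sum>x\<in>S. \<Sum>y\<in>S. (if a = x then 1 else 0) * (if b = y then 1 else 0) * B x y)" ..
  also have "\<dots> = (\<Sum>x\<in>S. \<Sum>y\<in>S. (\<Sum>i\<in>S. H a i * G i x) * (\<Sum>j\<in>S. H b j * G j y) * B x y)"
    using assms(2,3,4) by simp
  also have "\<dots> = (\<Sum>x\<in>S. \<Sum>y\<in>S. \<Sum>i\<in>S. \<Sum>j\<in>S. H a i * H b j * (G i x * B x y * G j y))"
    apply (simp add: sum_distrib_left sum_distrib_right mult_ac)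
    apply (rule sum.cong[OF refl], rule sum.cong[OF refl])
    apply (subst sum.swap)
    apply (simp add: mult_ac)
    done
  also have "\<dots> = (\<Sum>i\<in>S. \<Sum>j\<in>S. \<Sum>x\<in>S. \<Sum>y\<in>S. H a i * H b j * (G i x * B x y * G j y))"
    by (rule sum4_swap)
  also have "\<dots> = (\<Sum>i\<in>S. \<Sum>j\<in>S. H a i * H b j * (\<Sum>x\<in>S. \<Sum>y\<in>S. G i x * B x y * G j y))"
    by (simp add: sum_distrib_left)
  also have "\<dots> = 0" using assms(1) by simp
  finally show ?thesis .
qed


lemma bad_lambda:
  assumes G: "inG e f g4 g5" and K: "K \<in> {1..4}"
    and NF: "normal_form_at e f N g4 g5 c K s0 t0"
  shows "\<exists>lam. (\<exists>l\<in>{1..4}. lam l \<noteq> 0) \<and>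
     (\<forall>a\<in>{1..5}. \<forall>b\<in>{1..5}. (\<Sum>l\<in>{1..4}. lam l * entry e f N c l a b s0 t0) = 0)"
proof (intro exI conjI)
  define lam where "lam l = g4 K l s0 t0" for l
  have a4: "is_aut 4 e g4" and a5: "is_aut 5 f g5" using G by (auto simp: inG_def)
  obtain h4 where h4: "\<forall>k\<in>{1..4}. \<forall>l\<in>{1..4}. \<forall>s t. mprod 4 g4 h4 k l s t = (if k = l then 1 else 0)"
    using a4 unfolding is_aut_def by blast
  obtain h5 where h5: "\<forall>k\<in>{1..5}. \<forall>l\<in>{1..5}. \<forall>s t. mprod 5 h5 g5 k l s t = (if k = l then 1 else 0)"
    using a5 unfolding is_aut_def by blast
  show "\<exists>l\<in>{1..4}. lam l \<noteq> 0"
  proof (rule ccontr)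
    assume "\<not> (\<exists>l\<in>{1..4}. lam l \<noteq> 0)"
    then have "mprod 4 g4 h4 K K s0 t0 = 0" by (simp add: mprod_def lam_def)
    then show False using h4 K by auto
  qed
  have D: "detf 4 g4 s0 t0 \<noteq> 0" by (rule detf_nonzero[OF a4])
  define B where "B a b = (\<Sum>l\<in>{1..4}. lam l * entry e f N c l a b s0 t0)" for a b
  have Z: "\<forall>i\<in>{1..5}. \<forall>j\<in>{1..5}. (\<Sum>x\<in>{1..5}. \<Sum>y\<in>{1..5}. g5 i x s0 t0 * B x y * g5 j y s0 t0) = 0"
  proof (intro ballI)
    fix i j assume i: "i \<in> {1..5::nat}" and j: "j \<in> {1..5::nat}"
    have "translate_entry e f N g4 g5 c K i j s0 t0 = 0" using NF i j by (simp add: normal_form_at_def)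
    then have "(\<Sum>l\<in>{1..4}. g4 K l s0 t0 *
          (\<Sum>a\<in>{1..5}. \<Sum>b\<in>{1..5}. g5 i a s0 t0 * entry e f N c l a b s0 t0 * g5 j b s0 t0)) = 0"
      using D by (simp add: translate_entry_def)
    moreover have "(\<Sum>l\<in>{1..4}. g4 K l s0 t0 *
          (\<Sum>a\<in>{1..5}. \<Sum>b\<in>{1..5}. g5 i a s0 t0 * entry e f N c l a b s0 t0 * g5 j b s0 t0))
       = (\<Sum>x\<in>{1..5}. \<Sum>y\<in>{1..5}. g5 i x s0 t0 * B x y * g5 j y s0 t0)"
    proof -
      have "(\<Sum>l\<in>{1..4}. g4 K l s0 t0 *
          (\<Sum>a\<in>{1..5}. \<Sum>b\<in>{1..5}. g5 i a s0 t0 * entry e f N c l a b s0 t0 * g5 j b s0 t0))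
        = (\<Sum>l\<in>{1..4}. \<Sum>a\<in>{1..5}. \<Sum>b\<in>{1..5}. g5 i a s0 t0 * (lam l * entry e f N c l a b s0 t0) * g5 j b s0 t0)"
        by (simp add: sum_distrib_left lam_def mult_ac)
      also have "\<dots> = (\<Sum>a\<in>{1..5}. \<Sum>l\<in>{1..4}. \<Sum>b\<in>{1..5}. g5 i a s0 t0 * (lam l * entry e f N c l a b s0 t0) * g5 j b s0 t0)"
        by (rule sum.swap)
      also have "\<dots> = (\<Sum>a\<in>{1..5}. \<Sum>b\<in>{1..5}. \<Sum>l\<in>{1..4}. g5 i a s0 t0 * (lam l * entry e f N c l a b s0 t0) * g5 j b s0 t0)"
        by (rule sum.cong[OF refl], rule sum.swap)
      also have "\<dots> = (\<Sum>x\<in>{1..5}. \<Sum>y\<in>{1..5}. g5 i x s0 t0 * B x y * g5 j y s0 t0)"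
        by (simp add: B_def sum_distrib_left sum_distrib_right)
      finally show ?thesis .
    qed
    ultimately show "(\<Sum>x\<in>{1..5}. \<Sum>y\<in>{1..5}. g5 i x s0 t0 * B x y * g5 j y s0 t0) = 0" by simp
  qed
  show "\<forall>a\<in>{1..5}. \<forall>b\<in>{1..5}. (\<Sum>l\<in>{1..4}. lam l * entry e f N c l a b s0 t0) = 0"
  proof (intro ballI)
    fix a b assume a: "a \<in> {1..5::nat}" and b: "b \<in> {1..5::nat}"
    have "B a b = 0"
      by (rule congruence_zero[where G="\<lambda>i j. g5 i j s0 t0" and H="\<lambda>i j. h5 i j s0 t0", OF Z _ a b])
         (use h5 in \<open>auto simp: mprod_def\<close>)
    then show "(\<Sum>l\<in>{1..4}. lam l * entry e f N c l a b s0 t0) = 0" by (simp add: B_def)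
  qed
qed



lemma pform_entry: "i < j \<Longrightarrow> pform (dd e f N k i j) (\<lambda>c s t. entry e f N c k i j s t)"
  unfolding pform_def entry_def
  by (rule exI[of _ "\<lambda>m c. c (k,i,j,m)"]) (auto intro: polyfun.pvar)

lemma lt4: "(r::nat) < 4 \<Longrightarrow> r = 0 \<or> r = 1 \<or> r = 2 \<or> r = 3" by auto

lemma det_diag4:
  assumes "\<And>r j. r < 4 \<Longrightarrow> j < 4 \<Longrightarrow> r \<noteq> j \<Longrightarrow> X r j = 0"
  shows "det (mat 4 4 (\<lambda>(r,j). X r j)) = X 0 0 * X 1 1 * X 2 2 * X (3::nat) (3::nat)"
proof -
  have "det (mat 4 4 (\<lambda>(r,j). X r j)) = prod_list (diag_mat (mat 4 4 (\<lambda>(r,j). X r j)))"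
    by (rule det_upper_triangular[of _ 4]) (auto simp: upper_triangular_def assms)
  also have "\<dots> = X 0 0 * X 1 1 * X 2 2 * X 3 3"
    by (simp add: diag_mat_def upt_rec numeral_eq_Suc mult.assoc)
  finally show ?thesis .
qed

lemma sum14: "(\<Sum>l\<in>{1..4::nat}. g l) = g 1 + g 2 + g 3 + g 4"
proof -
  have "{1..4::nat} = {1,2,3,4}" by auto
  then show ?thesis by (simp add: add.assoc)
qed

lemma sum04: "(\<Sum>l\<in>{0..<4::nat}. g l) = g 0 + g 1 + g 2 + g 3"
proof -
  have "{0..<4::nat} = {0,1,2,3}" by auto
  then show ?thesis by (simp add: add.assoc)
qed

lemma sumlt4: "(\<Sum>l<4::nat. g l) = g 0 + g 1 + g 2 + g 3"
proof -
  have "{..<4::nat} = {0,1,2,3}" by auto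
  then show ?thesis by (simp add: add.assoc)
qed


lemma entry_zero: "i < j \<Longrightarrow> (\<And>m. c (k,i,j,m) = 0) \<Longrightarrow> entry e f N c k i j s t = 0"
  by (simp add: entry_def form_zero)

lemma entry_spow: "i < j \<Longrightarrow> 0 \<le> dd e f N k i j \<Longrightarrow>
   (\<And>m. c (k,i,j,m) = (if m = nat (dd e f N k i j) then 1 else 0)) \<Longrightarrow>
   entry e f N c k i j s t = s ^ nat (dd e f N k i j)"
  using form_spow[of "nat (dd e f N k i j)" 1 s t] by (simp add: entry_def)

lemma entry_tpow: "i < j \<Longrightarrow> 0 \<le> dd e f N k i j \<Longrightarrow>
   (\<And>m. c (k,i,j,m) = (if m = 0 then 1 else 0)) \<Longrightarrow>
   entry e f N c k i j s t = t ^ nat (dd e f N k i j)"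
  using form_tpow[of "nat (dd e f N k i j)" 1 s t] by (simp add: entry_def)

lemma pform_s: "pform 1 (\<lambda>c s t. s)"
  unfolding pform_def
  by (rule exI[of _ "\<lambda>m c. if m = 1 then 1 else 0"])
     (auto intro: polyfun.pconst simp: fun_eq_iff form_spow[of 1 1, simplified])



theorem proposition5p1:
  fixes g :: nat and N :: int and e f :: "nat \<Rightarrow> int"
  assumes hN: "N = int g + 4"
    and he_pos: "1 \<le> e 1"
    and he_mono: "e 1 \<le> e 2" "e 2 \<le> e 3" "e 3 \<le> e 4"
    and he_sum: "(\<Sum>k\<in>{1..4}. e k) = N"
    and hf_mono: "f 1 \<le> f 2" "f 2 \<le> f 3" "f 3 \<le> f 4" "f 4 \<le> f 5"
    and hf_sum: "(\<Sum>i\<in>{1..5}. f i) = 2 * N"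
    and cond_i: "\<And>i j k. 1 \<le> i \<Longrightarrow> i < j \<Longrightarrow> j \<le> 5 \<Longrightarrow> 1 \<le> k \<Longrightarrow> k \<le> 4 \<Longrightarrow>
                   i + j + k = 8 \<Longrightarrow> 0 \<le> dd e f N k i j"
    and cond_ii: "dd e f N 1 1 5 < 0 \<Longrightarrow> dd e f N 1 2 4 < 0 \<Longrightarrow> dd e f N 4 1 2 < 0 \<Longrightarrow>
                   dd e f N 1 2 5 = 0"
  shows "\<exists>Z. zariski_closed_in (sections e f N) Z \<and> Z \<noteq> sections e f N \<and>
           (\<forall>c \<in> sections e f N - Z.
              \<not> (\<exists>K\<in>{1..4}. \<exists>s0 t0. (s0, t0) \<noteq> (0, 0) \<and>
                    (\<exists>g4 g5. inG e f g4 g5 \<and> normal_form_at e f N g4 g5 c K s0 t0)))"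
proof -
  define kk :: "nat \<Rightarrow> nat" where "kk j = [1,2,3,4] ! j" for j
  define i1 :: "nat \<Rightarrow> nat" where "i1 r = [3,2,1,1] ! r" for r
  define j1 :: "nat \<Rightarrow> nat" where "j1 r = [4,4,4,3] ! r" for r
  define i2 :: "nat \<Rightarrow> nat" where "i2 r = [2,1,2,3] ! r" for r
  define j2 :: "nat \<Rightarrow> nat" where "j2 r = [5,5,3,5] ! r" for r
  have d1: "0 \<le> dd e f N 1 3 4" "0 \<le> dd e f N 2 2 4" "0 \<le> dd e f N 3 1 4" "0 \<le> dd e f N 4 1 3"
    by (rule cond_i; simp)+
  have d2: "0 \<le> dd e f N 1 2 5" "0 \<le> dd e f N 2 1 5" "0 \<le> dd e f N 3 2 3"
    by (rule cond_i; simp)+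
  have d2': "0 \<le> dd e f N 4 3 5" using d1(4) hf_mono by (simp add: dd_def)
  note d2 = d2 d2'
  define D1 where "D1 = nat (dd e f N 1 3 4) + nat (dd e f N 2 2 4) + nat (dd e f N 3 1 4) + nat (dd e f N 4 1 3)"
  define D2 where "D2 = nat (dd e f N 1 2 5) + nat (dd e f N 2 1 5) + nat (dd e f N 3 2 3) + nat (dd e f N 4 3 5)"
  define X1 where "X1 r j = (\<lambda>c s t. entry e f N c (kk j) (i1 r) (j1 r) s t)" for r j
  define X2 where "X2 r j = (\<lambda>c s t. entry e f N c (kk j) (i2 r) (j2 r) s t)" for r j
  define F where "F c s t = s * det (mat 4 4 (\<lambda>(r,j). X1 r j c s t))" for c s t
  define G where "G c s t = det (mat 4 4 (\<lambda>(r,j). X2 r j c s t))" for c s t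
  have pF: "pform (int (D1+1)) F"
  proof -
    have "pform ((\<Sum>r<4. f (i1 r) + f (j1 r) - N) + (\<Sum>j<4. e (kk j)))
        (\<lambda>c s t. det (mat 4 4 (\<lambda>(r,j). X1 r j c s t)))"
    proof (rule pform_det)
      fix r j :: nat assume r: "r < 4" and j: "j < 4"
      have "i1 r < j1 r" using lt4[OF r] by (auto simp: i1_def j1_def)
      from pform_entry[OF this, of e f N "kk j"]
      show "pform (f (i1 r) + f (j1 r) - N + e (kk j)) (X1 r j)"
        by (rule pform_cong) (auto simp: dd_def X1_def)
    qed
    from pform_mult[OF pform_s this]
    show ?thesis
      by (rule pform_cong) (use d1 in \<open>auto simp: F_def D1_def sumlt4 i1_def j1_def dd_def kk_def\<close>)
  qed
  have pG: "pform (int D2) G"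
  proof -
    have "pform ((\<Sum>r<4. f (i2 r) + f (j2 r) - N) + (\<Sum>j<4. e (kk j)))
        (\<lambda>c s t. det (mat 4 4 (\<lambda>(r,j). X2 r j c s t)))"
    proof (rule pform_det)
      fix r j :: nat assume r: "r < 4" and j: "j < 4"
      have "i2 r < j2 r" using lt4[OF r] by (auto simp: i2_def j2_def)
      from pform_entry[OF this, of e f N "kk j"]
      show "pform (f (i2 r) + f (j2 r) - N + e (kk j)) (X2 r j)"
        by (rule pform_cong) (auto simp: dd_def X2_def)
    qed
    then show ?thesis
      by (rule pform_cong) (use d2 in \<open>auto simp: G_def D2_def sumlt4 i2_def j2_def dd_def kk_def\<close>)
  qed
  define M1 :: "(nat \<times> nat \<times> nat) set" where "M1 = {(1,3,4),(2,2,4),(3,1,4),(4,1,3)}"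
  define M2 :: "(nat \<times> nat \<times> nat) set" where "M2 = {(1,2,5),(2,1,5),(3,2,3),(4,3,5)}"
  define c0 :: "nat \<times> nat \<times> nat \<times> nat \<Rightarrow> complex" where
    "c0 x = (case x of (k,i,j,m) \<Rightarrow> if (k,i,j) \<in> M1 \<and> m = nat (dd e f N k i j) then 1
        else if (k,i,j) \<in> M2 \<and> m = 0 then 1 else 0)" for x
  have c0sec: "c0 \<in> sections e f N"
  proof (unfold sections_def, intro CollectI allI impI)
    fix k i j m assume nz: "c0 (k,i,j,m) \<noteq> 0"
    then have h: "(k,i,j) \<in> M1 \<union> M2" by (auto simp: c0_def split: if_splits)
    from nz have hm: "m \<le> nat (dd e f N k i j)" by (auto simp: c0_def split: if_splits)
    from h have "k \<in> {1..4} \<and> 1 \<le> i \<and> i < j \<and> j \<le> 5 \<and> 0 \<le> dd e f N k i j"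
      unfolding M1_def M2_def using d1 d2 by auto
    with hm show "k \<in> {1..4} \<and> 1 \<le> i \<and> i < j \<and> j \<le> 5 \<and> 0 \<le> dd e f N k i j \<and> m \<le> nat (dd e f N k i j)"
      by simp
  qed
  have F0: "F c0 s t = 1 * s ^ (D1+1)" for s t
  proof -
    have dg: "det (mat 4 4 (\<lambda>(r,j). X1 r j c0 s t)) = X1 0 0 c0 s t * X1 1 1 c0 s t * X1 2 2 c0 s t * X1 3 3 c0 s t"
    proof (rule det_diag4)
      fix r j :: nat assume "r < 4" "j < 4" "r \<noteq> j"
      then show "X1 r j c0 s t = 0"
        using lt4[of r] lt4[of j]
        by (auto simp: X1_def i1_def j1_def kk_def intro!: entry_zero simp: c0_def M1_def M2_def)
    qed
    have e0: "X1 0 0 c0 s t = s ^ nat (dd e f N 1 3 4)"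
    proof -
      have "X1 0 0 c0 s t = entry e f N c0 1 3 4 s t" by (simp add: X1_def i1_def j1_def kk_def)
      also have "\<dots> = s ^ nat (dd e f N 1 3 4)" by (rule entry_spow[OF _ d1(1)]) (auto simp: c0_def M1_def M2_def)
      finally show ?thesis .
    qed
    have e1: "X1 1 1 c0 s t = s ^ nat (dd e f N 2 2 4)"
    proof -
      have "X1 1 1 c0 s t = entry e f N c0 2 2 4 s t" by (simp add: X1_def i1_def j1_def kk_def)
      also have "\<dots> = s ^ nat (dd e f N 2 2 4)" by (rule entry_spow[OF _ d1(2)]) (auto simp: c0_def M1_def M2_def)
      finally show ?thesis .
    qed
    have e2: "X1 2 2 c0 s t = s ^ nat (dd e f N 3 1 4)"
    proof -
      have "X1 2 2 c0 s t = entry e f N c0 3 1 4 s t" by (simp add: X1_def i1_def j1_def kk_def)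
      also have "\<dots> = s ^ nat (dd e f N 3 1 4)" by (rule entry_spow[OF _ d1(3)]) (auto simp: c0_def M1_def M2_def)
      finally show ?thesis .
    qed
    have e3: "X1 3 3 c0 s t = s ^ nat (dd e f N 4 1 3)"
    proof -
      have "X1 3 3 c0 s t = entry e f N c0 4 1 3 s t" by (simp add: X1_def i1_def j1_def kk_def)
      also have "\<dots> = s ^ nat (dd e f N 4 1 3)" by (rule entry_spow[OF _ d1(4)]) (auto simp: c0_def M1_def M2_def)
      finally show ?thesis .
    qed
    show ?thesis using dg e0 e1 e2 e3 by (simp add: F_def D1_def power_add mult_ac)
  qed
  have G0: "G c0 s t = 1 * t ^ D2" for s t
  proof -
    have dg: "det (mat 4 4 (\<lambda>(r,j). X2 r j c0 s t)) = X2 0 0 c0 s t * X2 1 1 c0 s t * X2 2 2 c0 s t * X2 3 3 c0 s t"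
    proof (rule det_diag4)
      fix r j :: nat assume "r < 4" "j < 4" "r \<noteq> j"
      then show "X2 r j c0 s t = 0"
        using lt4[of r] lt4[of j]
        by (auto simp: X2_def i2_def j2_def kk_def intro!: entry_zero simp: c0_def M1_def M2_def)
    qed
    have e0: "X2 0 0 c0 s t = t ^ nat (dd e f N 1 2 5)"
    proof -
      have "X2 0 0 c0 s t = entry e f N c0 1 2 5 s t" by (simp add: X2_def i2_def j2_def kk_def)
      also have "\<dots> = t ^ nat (dd e f N 1 2 5)" by (rule entry_tpow[OF _ d2(1)]) (auto simp: c0_def M1_def M2_def)
      finally show ?thesis .
    qed
    have e1: "X2 1 1 c0 s t = t ^ nat (dd e f N 2 1 5)"
    proof -
      have "X2 1 1 c0 s t = entry e f N c0 2 1 5 s t" by (simp add: X2_def i2_def j2_def kk_def)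
      also have "\<dots> = t ^ nat (dd e f N 2 1 5)" by (rule entry_tpow[OF _ d2(2)]) (auto simp: c0_def M1_def M2_def)
      finally show ?thesis .
    qed
    have e2: "X2 2 2 c0 s t = t ^ nat (dd e f N 3 2 3)"
    proof -
      have "X2 2 2 c0 s t = entry e f N c0 3 2 3 s t" by (simp add: X2_def i2_def j2_def kk_def)
      also have "\<dots> = t ^ nat (dd e f N 3 2 3)" by (rule entry_tpow[OF _ d2(3)]) (auto simp: c0_def M1_def M2_def)
      finally show ?thesis .
    qed
    have e3: "X2 3 3 c0 s t = t ^ nat (dd e f N 4 3 5)"
    proof -
      have "X2 3 3 c0 s t = entry e f N c0 4 3 5 s t" by (simp add: X2_def i2_def j2_def kk_def)
      also have "\<dots> = t ^ nat (dd e f N 4 3 5)" by (rule entry_tpow[OF _ d2(4)]) (auto simp: c0_def M1_def M2_def)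
      finally show ?thesis .
    qed
    show ?thesis using dg e0 e1 e2 e3 by (simp add: G_def D2_def power_add mult_ac)
  qed
  have pos: "0 < D1 + 1 + D2" by simp
  obtain P where P: "polyfun P" "P c0 \<noteq> 0"
    "\<forall>x s0 t0. (s0,t0) \<noteq> (0,0) \<longrightarrow> F x s0 t0 = 0 \<longrightarrow> G x s0 t0 = 0 \<longrightarrow> P x = 0"
    using resultant_exists[where Da="D1+1" and Db=D2 and F=F and G=G and xz=c0 and ka=1 and kb=1] pF pG pos F0 G0 by simp blast
  define Z where "Z = {x \<in> sections e f N. P x = 0}"
  have "zariski_closed_in (sections e f N) Z"
    unfolding zariski_closed_in_def Z_def by (rule exI[of _ "{P}"]) (auto simp: P(1))
  moreover have "Z \<noteq> sections e f N" using c0sec P(2) by (auto simp: Z_def)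
  moreover have "\<forall>c \<in> sections e f N - Z.
              \<not> (\<exists>K\<in>{1..4}. \<exists>s0 t0. (s0, t0) \<noteq> (0, 0) \<and>
                    (\<exists>g4 g5. inG e f g4 g5 \<and> normal_form_at e f N g4 g5 c K s0 t0))"
  proof (intro ballI notI)
    fix c assume c: "c \<in> sections e f N - Z"
    assume "\<exists>K\<in>{1..4}. \<exists>s0 t0. (s0, t0) \<noteq> (0, 0) \<and>
                    (\<exists>g4 g5. inG e f g4 g5 \<and> normal_form_at e f N g4 g5 c K s0 t0)"
    then obtain K s0 t0 g4 g5 where K: "K \<in> {1..4}" and p: "(s0, t0) \<noteq> (0, 0)"
      and GG: "inG e f g4 g5" and NF: "normal_form_at e f N g4 g5 c K s0 t0" by blast
    obtain lam where lam: "\<exists>l\<in>{1..4}. lam l \<noteq> 0"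
      "\<forall>a\<in>{1..5}. \<forall>b\<in>{1..5}. (\<Sum>l\<in>{1..4}. lam l * entry e f N c l a b s0 t0) = 0"
      using bad_lambda[OF GG K NF] by blast
    define v where "v = vec 4 (\<lambda>j. lam (kk j))"
    have vc: "v \<in> carrier_vec 4" by (simp add: v_def)
    have vnz: "v \<noteq> 0\<^sub>v 4"
    proof
      assume "v = 0\<^sub>v 4"
      then have z: "v $ j = 0" if "j < 4" for j using that by simp
      have "lam l = 0" if "l \<in> {1..4}" for l
      proof -
        have "l = 1 \<or> l = 2 \<or> l = 3 \<or> l = 4" using that by auto
        then show ?thesis using z[of 0] z[of 1] z[of 2] z[of 3] by (auto simp: v_def kk_def)
      qed
      then show False using lam(1) by blast
    qed
    have F0: "F c s0 t0 = 0"
    proof -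
      have "det (mat 4 4 (\<lambda>(r,j). X1 r j c s0 t0)) = 0"
        unfolding det_0_iff_vec_prod_zero[of _ 4, OF mat_carrier]
      proof (intro exI conjI)
        show "mat 4 4 (\<lambda>(r,j). X1 r j c s0 t0) *\<^sub>v v = 0\<^sub>v 4"
        proof (rule eq_vecI)
          fix r assume "r < dim_vec (0\<^sub>v 4 :: complex vec)"
          then have r: "r < 4" by simp
          have ab: "i1 r \<in> {1..5}" "j1 r \<in> {1..5}" using lt4[OF r] by (auto simp: i1_def j1_def)
          have "(mat 4 4 (\<lambda>(r,j). X1 r j c s0 t0) *\<^sub>v v) $ r = (\<Sum>j\<in>{0..<4}. X1 r j c s0 t0 * lam (kk j))"
            using r by (simp add: v_def scalar_prod_def)
          also have "\<dots> = (\<Sum>l\<in>{1..4}. lam l * entry e f N c l (i1 r) (j1 r) s0 t0)"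
            unfolding sum04 sum14 by (simp add: X1_def kk_def mult_ac)
          also have "\<dots> = 0" using lam(2) ab by blast
          finally show "(mat 4 4 (\<lambda>(r,j). X1 r j c s0 t0) *\<^sub>v v) $ r = 0\<^sub>v 4 $ r" using r by simp
        qed simp
      qed (use vc vnz in auto)
      then show ?thesis by (simp add: F_def)
    qed
    have G0: "G c s0 t0 = 0"
    proof -
      have "det (mat 4 4 (\<lambda>(r,j). X2 r j c s0 t0)) = 0"
        unfolding det_0_iff_vec_prod_zero[of _ 4, OF mat_carrier]
      proof (intro exI conjI)
        show "mat 4 4 (\<lambda>(r,j). X2 r j c s0 t0) *\<^sub>v v = 0\<^sub>v 4"
        proof (rule eq_vecI)
          fix r assume "r < dim_vec (0\<^sub>v 4 :: complex vec)"
          then have r: "r < 4" by simp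
          have ab: "i2 r \<in> {1..5}" "j2 r \<in> {1..5}" using lt4[OF r] by (auto simp: i2_def j2_def)
          have "(mat 4 4 (\<lambda>(r,j). X2 r j c s0 t0) *\<^sub>v v) $ r = (\<Sum>j\<in>{0..<4}. X2 r j c s0 t0 * lam (kk j))"
            using r by (simp add: v_def scalar_prod_def)
          also have "\<dots> = (\<Sum>l\<in>{1..4}. lam l * entry e f N c l (i2 r) (j2 r) s0 t0)"
            unfolding sum04 sum14 by (simp add: X2_def kk_def mult_ac)
          also have "\<dots> = 0" using lam(2) ab by blast
          finally show "(mat 4 4 (\<lambda>(r,j). X2 r j c s0 t0) *\<^sub>v v) $ r = 0\<^sub>v 4 $ r" using r by simp
        qed simp
      qed (use vc vnz in auto)
      then show ?thesis by (simp add: G_def)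
    qed
    have "P c = 0" using P(3) p F0 G0 by blast
    then show False using c by (auto simp: Z_def)
  qed
  ultimately show ?thesis by blast
qed

thm_deps proposition5p1

end
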